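(* Let $\mathrm{Var}$ be a variety of algebras with one binary multiplication defined by multilinear identities. If a multilinear polynomial $f$ in the operations $\prec,\succ$ is an identity of all algebras over the operad $\mathrm{Var}\circ\mathrm{Nov}$ (under the identification described below), then $f$ is a derived identity of $\mathrm{Var}$.
   Context: For an algebra $A$ with derivation $d$, $A^{(d)}=(A,\prec,\succ)$ with $x\prec y=x\,d(y)$, $x\succ y=d(x)\,y$; $f$ is a derived identity of $\mathrm{Var}$ if $f=0$ on $A^{(d)}$ for all $A\in\mathrm{Var}$ and all derivations $d$ of $A$. The operad $\mathrm{Var}$ has components $\mathrm{Var}(n)$ = multilinear elements of degree $n$ in the free $\mathrm{Var}$-algebra on $x_1,x_2,\dots$. $\mathrm{Nov}$ is the operad of Novikov algebras: one operation $\circ$ with $(a\circ b)\circ c-a\circ(b\circ c)=(b\circ a)\circ c-b\circ(a\circ c)$ and $(a\circ b)\circ c=(a\circ c)\circ b$. The Hadamard product $\mathcal P\otimes\mathcal Q$ has components $\mathcal P(n)\otimes\mathcal Q(n)$ with componentwise composition; the Manin white product $\mathcal P\circ\mathcal Q$ is the suboperad generated by $\mathcal P(2)\otimes\mathcal Q(2)$. The operations of $\mathrm{Var}\circ\mathrm{Nov}$ are identified as $x_1\prec x_2=x_1x_2\otimes(x_1\circ x_2)$, $x_1\succ x_2=x_1x_2\otimes(x_2\circ x_1)$. *)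

theory Defs
  imports Main "HOL-Library.Function_Algebras"
begin

text \<open>Monomials (binary trees) in the variables x_0, x_1, ... for ONE binary operation.
  Used both for the operation of Var (ordinary product) and of Nov (the Novikov product).\<close>
datatype mon = V nat | M mon mon

fun leaves :: "mon \<Rightarrow> nat list" where
  "leaves (V i) = [i]"
| "leaves (M s t) = leaves s @ leaves t"

definition fsupp :: "('m \<Rightarrow> 'k::zero) \<Rightarrow> bool" where
  "fsupp p \<longleftrightarrow> finite {m. p m \<noteq> 0}"

definition mono :: "'m \<Rightarrow> ('m \<Rightarrow> 'k::{zero,one})" where
  "mono m = (\<lambda>x. if x = m then 1 else 0)"

definition pmul :: "(mon \<Rightarrow> 'k::comm_ring_1) \<Rightarrow> (mon \<Rightarrow> 'k) \<Rightarrow> (mon \<Rightarrow> 'k)" where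
  "pmul p q = (\<lambda>m. case m of V _ \<Rightarrow> 0 | M s t \<Rightarrow> p s * q t)"

fun evmon :: "(nat \<Rightarrow> (mon \<Rightarrow> 'k::comm_ring_1)) \<Rightarrow> mon \<Rightarrow> (mon \<Rightarrow> 'k)" where
  "evmon \<sigma> (V i) = \<sigma> i"
| "evmon \<sigma> (M s t) = pmul (evmon \<sigma> s) (evmon \<sigma> t)"

definition psubst :: "(nat \<Rightarrow> (mon \<Rightarrow> 'k::comm_ring_1)) \<Rightarrow> (mon \<Rightarrow> 'k) \<Rightarrow> (mon \<Rightarrow> 'k)" where
  "psubst \<sigma> p = (\<lambda>m. \<Sum>t\<in>{t. p t \<noteq> 0}. p t * evmon \<sigma> t m)"

inductive_set tideal :: "(mon \<Rightarrow> 'k::comm_ring_1) set \<Rightarrow> (mon \<Rightarrow> 'k) set" for S where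
  gen: "g \<in> S \<Longrightarrow> (\<forall>i. fsupp (\<sigma> i)) \<Longrightarrow> psubst \<sigma> g \<in> tideal S"
| zero: "0 \<in> tideal S"
| add: "p \<in> tideal S \<Longrightarrow> q \<in> tideal S \<Longrightarrow> p + q \<in> tideal S"
| smult: "p \<in> tideal S \<Longrightarrow> (\<lambda>m. c * p m) \<in> tideal S"
| mulr: "p \<in> tideal S \<Longrightarrow> fsupp q \<Longrightarrow> pmul p q \<in> tideal S"
| mull: "p \<in> tideal S \<Longrightarrow> fsupp q \<Longrightarrow> pmul q p \<in> tideal S"

definition ml_mon :: "nat \<Rightarrow> mon \<Rightarrow> bool" where
  "ml_mon n m \<longleftrightarrow> distinct (leaves m) \<and> set (leaves m) = {1..n}"

definition ml_pol :: "nat \<Rightarrow> (mon \<Rightarrow> 'k::zero) \<Rightarrow> bool" where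
  "ml_pol n p \<longleftrightarrow> fsupp p \<and> (\<forall>m. p m \<noteq> 0 \<longrightarrow> ml_mon n m)"

definition multilinear_identity :: "(mon \<Rightarrow> 'k::zero) \<Rightarrow> bool" where
  "multilinear_identity p \<longleftrightarrow> fsupp p \<and>
     (\<exists>X. \<forall>m. p m \<noteq> 0 \<longrightarrow> distinct (leaves m) \<and> set (leaves m) = X)"

text \<open>Var(n): multilinear component of degree n of the free Var-algebra, i.e. the space of
  multilinear polynomials of degree n modulo its intersection with the T-ideal; we record the
  kernel of this quotient map.\<close>
definition var_kernel :: "(mon \<Rightarrow> 'k::comm_ring_1) set \<Rightarrow> nat \<Rightarrow> (mon \<Rightarrow> 'k) set" where
  "var_kernel S n = {p \<in> tideal S. ml_pol n p}"

definition nov_ids :: "(mon \<Rightarrow> 'k::comm_ring_1) set" where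
  "nov_ids =
    { mono (M (M (V 1) (V 2)) (V 3)) - mono (M (V 1) (M (V 2) (V 3)))
      - mono (M (M (V 2) (V 1)) (V 3)) + mono (M (V 2) (M (V 1) (V 3))),
      mono (M (M (V 1) (V 2)) (V 3)) - mono (M (M (V 1) (V 3)) (V 2)) }"

datatype dmon = DV nat | Prec dmon dmon | Succ dmon dmon

fun dleaves :: "dmon \<Rightarrow> nat list" where
  "dleaves (DV i) = [i]"
| "dleaves (Prec s t) = dleaves s @ dleaves t"
| "dleaves (Succ s t) = dleaves s @ dleaves t"

definition ml_dpol :: "nat \<Rightarrow> (dmon \<Rightarrow> 'k::zero) \<Rightarrow> bool" where
  "ml_dpol n f \<longleftrightarrow> fsupp f \<and>
     (\<forall>m. f m \<noteq> 0 \<longrightarrow> distinct (dleaves m) \<and> set (dleaves m) = {1..n})"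

text \<open>Identification x_1 prec x_2 = x_1x_2 (x) (x_1 o x_2),  x_1 succ x_2 = x_1x_2 (x) (x_2 o x_1),
  extended to all monomials by (componentwise) operadic composition.\<close>
fun phi :: "dmon \<Rightarrow> mon \<times> mon" where
  "phi (DV i) = (V i, V i)"
| "phi (Prec s t) = (M (fst (phi s)) (fst (phi t)), M (snd (phi s)) (snd (phi t)))"
| "phi (Succ s t) = (M (fst (phi s)) (fst (phi t)), M (snd (phi t)) (snd (phi s)))"

definition tens_image :: "(dmon \<Rightarrow> 'k::comm_ring_1) \<Rightarrow> (mon \<times> mon \<Rightarrow> 'k)" where
  "tens_image f = (\<lambda>x. \<Sum>m\<in>{m. f m \<noteq> 0 \<and> phi m = x}. f m)"

definition tens :: "(mon \<Rightarrow> 'k::times) \<Rightarrow> (mon \<Rightarrow> 'k) \<Rightarrow> (mon \<times> mon \<Rightarrow> 'k)" where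
  "tens p q = (\<lambda>(u, w). p u * q w)"

definition lin_span :: "('m \<Rightarrow> 'k::field) set \<Rightarrow> ('m \<Rightarrow> 'k) set" where
  "lin_span X = {(\<Sum>a\<in>t. (\<lambda>x. r a * a x)) | t r. finite t \<and> t \<subseteq> X}"

text \<open>Kernel of the map from (multilinear polys of degree n) (x) (multilinear polys of degree n)
  onto Var(n) (x) Nov(n):  I_n (x) Q_n + P_n (x) J_n.\<close>
definition hadamard_kernel :: "(mon \<Rightarrow> 'k::field) set \<Rightarrow> nat \<Rightarrow> (mon \<times> mon \<Rightarrow> 'k) set" where
  "hadamard_kernel S n = lin_span
     ({tens g (mono w) | g w. g \<in> var_kernel S n \<and> ml_mon n w}
      \<union> {tens (mono u) h | u h. ml_mon n u \<and> h \<in> var_kernel nov_ids n})"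

text \<open>f is an identity of all algebras over Var o Nov iff its image in
  (Var o Nov)(n), a subspace of Var(n) (x) Nov(n), is zero.\<close>
definition white_identity :: "(mon \<Rightarrow> 'k::field) set \<Rightarrow> nat \<Rightarrow> (dmon \<Rightarrow> 'k) \<Rightarrow> bool" where
  "white_identity S n f \<longleftrightarrow> tens_image f \<in> hadamard_kernel S n"

definition is_algebra :: "('k::field \<Rightarrow> 'a::ab_group_add \<Rightarrow> 'a) \<Rightarrow> ('a \<Rightarrow> 'a \<Rightarrow> 'a) \<Rightarrow> bool" where
  "is_algebra scale mul \<longleftrightarrow>
     (\<forall>a x y. scale a (x + y) = scale a x + scale a y) \<and>
     (\<forall>a b x. scale (a + b) x = scale a x + scale b x) \<and>
     (\<forall>a b x. scale a (scale b x) = scale (a * b) x) \<and>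
     (\<forall>x. scale 1 x = x) \<and>
     (\<forall>x y z. mul (x + y) z = mul x z + mul y z \<and> mul x (y + z) = mul x y + mul x z) \<and>
     (\<forall>c x y. mul (scale c x) y = scale c (mul x y) \<and> mul x (scale c y) = scale c (mul x y))"

fun eval_mon :: "('a \<Rightarrow> 'a \<Rightarrow> 'a) \<Rightarrow> (nat \<Rightarrow> 'a) \<Rightarrow> mon \<Rightarrow> 'a" where
  "eval_mon mul a (V i) = a i"
| "eval_mon mul a (M s t) = mul (eval_mon mul a s) (eval_mon mul a t)"

definition eval_pol :: "('k::zero \<Rightarrow> 'a::comm_monoid_add \<Rightarrow> 'a) \<Rightarrow> ('a \<Rightarrow> 'a \<Rightarrow> 'a) \<Rightarrow> (nat \<Rightarrow> 'a) \<Rightarrow> (mon \<Rightarrow> 'k) \<Rightarrow> 'a" where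
  "eval_pol scale mul a p = (\<Sum>m\<in>{m. p m \<noteq> 0}. scale (p m) (eval_mon mul a m))"

definition in_var :: "(mon \<Rightarrow> 'k::field) set \<Rightarrow> ('k \<Rightarrow> 'a::ab_group_add \<Rightarrow> 'a) \<Rightarrow> ('a \<Rightarrow> 'a \<Rightarrow> 'a) \<Rightarrow> bool" where
  "in_var S scale mul \<longleftrightarrow> is_algebra scale mul \<and> (\<forall>g\<in>S. \<forall>a. eval_pol scale mul a g = 0)"

definition is_derivation :: "('k::field \<Rightarrow> 'a::ab_group_add \<Rightarrow> 'a) \<Rightarrow> ('a \<Rightarrow> 'a \<Rightarrow> 'a) \<Rightarrow> ('a \<Rightarrow> 'a) \<Rightarrow> bool" where
  "is_derivation scale mul d \<longleftrightarrow>
     (\<forall>x y. d (x + y) = d x + d y) \<and> (\<forall>c x. d (scale c x) = scale c (d x)) \<and>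
     (\<forall>x y. d (mul x y) = mul (d x) y + mul x (d y))"

fun eval_dmon :: "('a \<Rightarrow> 'a \<Rightarrow> 'a) \<Rightarrow> ('a \<Rightarrow> 'a) \<Rightarrow> (nat \<Rightarrow> 'a) \<Rightarrow> dmon \<Rightarrow> 'a" where
  "eval_dmon mul d a (DV i) = a i"
| "eval_dmon mul d a (Prec s t) = mul (eval_dmon mul d a s) (d (eval_dmon mul d a t))"
| "eval_dmon mul d a (Succ s t) = mul (d (eval_dmon mul d a s)) (eval_dmon mul d a t)"

definition eval_dpol :: "('k::zero \<Rightarrow> 'a::comm_monoid_add \<Rightarrow> 'a) \<Rightarrow> ('a \<Rightarrow> 'a \<Rightarrow> 'a) \<Rightarrow> ('a \<Rightarrow> 'a) \<Rightarrow> (nat \<Rightarrow> 'a) \<Rightarrow> (dmon \<Rightarrow> 'k) \<Rightarrow> 'a" where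
  "eval_dpol scale mul d a f = (\<Sum>m\<in>{m. f m \<noteq> 0}. scale (f m) (eval_dmon mul d a m))"

end

theory Submission
  imports Defs
begin


lemma sum_fun_apply: "(\<Sum>i\<in>A. f i) x = (\<Sum>i\<in>A. f i x)"
  by (induction A rule: infinite_finite_induct) auto

definition lf :: "('k::zero \<Rightarrow> 'a::comm_monoid_add \<Rightarrow> 'a) \<Rightarrow> ('m \<Rightarrow> 'k) \<Rightarrow> ('m \<Rightarrow> 'a) \<Rightarrow> 'a" where
  "lf sc p E = (\<Sum>m\<in>{m. p m \<noteq> 0}. sc (p m) (E m))"

lemma fsupp_zero[simp]: "fsupp (0::'m \<Rightarrow> 'k::zero)" by (simp add: fsupp_def)

lemma fsupp_add: "fsupp p \<Longrightarrow> fsupp q \<Longrightarrow> fsupp (p + q :: 'm \<Rightarrow> 'k::comm_ring_1)"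
  unfolding fsupp_def by (rule finite_subset[of _ "{m. p m \<noteq> 0} \<union> {m. q m \<noteq> 0}"]) auto

lemma fsupp_smult: "fsupp p \<Longrightarrow> fsupp (\<lambda>m. c * p m :: 'k::comm_ring_1)"
  unfolding fsupp_def by (rule finite_subset[of _ "{m. p m \<noteq> 0}"]) auto

lemma fsupp_sum: "finite t \<Longrightarrow> (\<And>a. a \<in> t \<Longrightarrow> fsupp (g a :: 'm \<Rightarrow> 'k::comm_ring_1)) \<Longrightarrow> fsupp (\<Sum>a\<in>t. g a)"
  by (induction t rule: finite_induct) (auto simp: fsupp_add)


locale alg =
  fixes scale :: "'k::field \<Rightarrow> 'a::ab_group_add \<Rightarrow> 'a" and mul :: "'a \<Rightarrow> 'a \<Rightarrow> 'a"
  assumes isalg: "is_algebra scale mul"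
begin

lemma sc_add: "scale a (x + y) = scale a x + scale a y" using isalg unfolding is_algebra_def by blast
lemma sc_add2: "scale (a + b) x = scale a x + scale b x" using isalg unfolding is_algebra_def by blast
lemma sc_assoc: "scale a (scale b x) = scale (a * b) x" using isalg unfolding is_algebra_def by blast
lemma sc_one[simp]: "scale 1 x = x" using isalg unfolding is_algebra_def by blast
lemma mul_add1: "mul (x + y) z = mul x z + mul y z" using isalg unfolding is_algebra_def by blast
lemma mul_add2: "mul x (y + z) = mul x y + mul x z" using isalg unfolding is_algebra_def by blast
lemma mul_sc1: "mul (scale c x) y = scale c (mul x y)" using isalg unfolding is_algebra_def by blast
lemma mul_sc2: "mul x (scale c y) = scale c (mul x y)" using isalg unfolding is_algebra_def by blast

lemma sc_zero[simp]: "scale a 0 = 0"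
  using sc_add[of a 0 0] by simp
lemma sc_zero2[simp]: "scale 0 x = 0"
  using sc_add2[of 0 0 x] by simp
lemma mul_zero1[simp]: "mul 0 y = 0" using mul_add1[of 0 0 y] by simp
lemma mul_zero2[simp]: "mul x 0 = 0" using mul_add2[of x 0 0] by simp
lemma sc_neg: "scale (- a) x = - scale a x"
  using sc_add2[of a "-a" x] by (simp add: eq_neg_iff_add_eq_0 add.commute)
lemma sc_minus_one: "scale (-1) x = - x" using sc_neg[of 1 x] by simp
lemma sc_diff: "scale a (x - y) = scale a x - scale a y"
proof -
  have "scale a x = scale a (x-y) + scale a y" using sc_add[of a "x-y" y] by simp
  thus ?thesis by (simp add: algebra_simps)
qed
lemma mul_neg1: "mul (- x) y = - mul x y"
  using mul_add1[of "-x" x y] by (simp add: eq_neg_iff_add_eq_0)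
lemma mul_neg2: "mul x (- y) = - mul x y"
  using mul_add2[of x "-y" y] by (simp add: eq_neg_iff_add_eq_0)
lemma mul_diff1: "mul (x - y) z = mul x z - mul y z"
  using mul_add1[of x "-y" z] by (simp add: mul_neg1)
lemma mul_diff2: "mul x (y - z) = mul x y - mul x z"
  using mul_add2[of x y "-z"] by (simp add: mul_neg2)

lemma sc_sum: "scale a (\<Sum>i\<in>I. f i) = (\<Sum>i\<in>I. scale a (f i))"
  by (induction I rule: infinite_finite_induct) (auto simp: sc_add)
lemma sc_sum2: "scale (\<Sum>i\<in>I. f i) x = (\<Sum>i\<in>I. scale (f i) x)"
  by (induction I rule: infinite_finite_induct) (auto simp: sc_add2)
lemma mul_sum1: "mul (\<Sum>i\<in>I. f i) y = (\<Sum>i\<in>I. mul (f i) y)"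
  by (induction I rule: infinite_finite_induct) (auto simp: mul_add1)
lemma mul_sum2: "mul y (\<Sum>i\<in>I. f i) = (\<Sum>i\<in>I. mul y (f i))"
  by (induction I rule: infinite_finite_induct) (auto simp: mul_add2)

lemma mul_sum_sum:
  "mul (\<Sum>x\<in>F. scale (\<alpha> x) (X x)) (\<Sum>y\<in>G. scale (\<beta> y) (Y y))
   = (\<Sum>(x,y)\<in>F\<times>G. scale (\<alpha> x * \<beta> y) (mul (X x) (Y y)))"
  unfolding mul_sum1 mul_sc1 mul_sum2 mul_sc2 sc_sum sc_assoc
  apply (subst sum.swap)
  by (simp add: sum.cartesian_product mult.commute)

lemma lf_superset:
  assumes "finite F" "{m. p m \<noteq> 0} \<subseteq> F"
  shows "lf scale p E = (\<Sum>m\<in>F. scale (p m) (E m))"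
  unfolding lf_def by (rule sum.mono_neutral_left) (use assms in auto)

lemma lf_add: "fsupp p \<Longrightarrow> fsupp q \<Longrightarrow> lf scale (p + q) E = lf scale p E + lf scale q E"
proof -
  assume a: "fsupp p" "fsupp q"
  let ?F = "{m. p m \<noteq> 0} \<union> {m. q m \<noteq> 0}"
  have f: "finite ?F" using a by (simp add: fsupp_def)
  show ?thesis
    apply (subst (1 2 3) lf_superset[OF f])
    by (auto simp: sc_add2 sum.distrib)
qed

lemma lf_smult: "fsupp p \<Longrightarrow> lf scale (\<lambda>m. c * p m) E = scale c (lf scale p E)"
proof -
  assume a: "fsupp p"
  have f: "finite {m. p m \<noteq> 0}" using a by (simp add: fsupp_def)
  show ?thesis
    apply (subst (1 2) lf_superset[OF f])
    by (auto simp: sc_sum sc_assoc)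
qed

lemma lf_zero[simp]: "lf scale 0 E = 0" by (simp add: lf_def)

lemma lf_sum: "finite t \<Longrightarrow> (\<And>a. a \<in> t \<Longrightarrow> fsupp (g a)) \<Longrightarrow>
   lf scale (\<Sum>a\<in>t. g a) E = (\<Sum>a\<in>t. lf scale (g a) E)"
  by (induction t rule: finite_induct) (auto simp: lf_add fsupp_sum)

lemma lf_delta: "lf scale (\<lambda>m. if m = m0 then c else 0) E = scale c (E m0)"
  by (cases "c = 0") (auto simp: lf_def)

end


lemma pmul_sub: "{m. pmul p q m \<noteq> 0} \<subseteq> (\<lambda>(s,t). M s t) ` ({s. p s \<noteq> 0} \<times> {t. q t \<noteq> 0})"
proof
  fix m assume "m \<in> {m. pmul p q m \<noteq> 0}"
  then show "m \<in> (\<lambda>(s,t). M s t) ` ({s. p s \<noteq> 0} \<times> {t. q t \<noteq> 0})"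
    by (cases m) (auto simp: pmul_def)
qed

lemma fsupp_pmul: "fsupp p \<Longrightarrow> fsupp q \<Longrightarrow> fsupp (pmul p q)"
  unfolding fsupp_def by (rule finite_subset[OF pmul_sub]) auto

lemma evmon_fsupp: "(\<forall>i. fsupp (\<sigma> i)) \<Longrightarrow> fsupp (evmon \<sigma> t)"
  by (induction t) (auto simp: fsupp_pmul)

lemma psubst_sum: "psubst \<sigma> g = (\<Sum>t\<in>{t. g t \<noteq> 0}. (\<lambda>m. g t * evmon \<sigma> t m))"
  by (rule ext) (simp add: psubst_def sum_fun_apply)

lemma fsupp_psubst: "fsupp g \<Longrightarrow> (\<forall>i. fsupp (\<sigma> i)) \<Longrightarrow> fsupp (psubst \<sigma> g)"
  unfolding psubst_sum
  by (rule fsupp_sum) (auto simp: fsupp_def[of g] intro!: fsupp_smult evmon_fsupp)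

lemma tideal_fsupp: "p \<in> tideal S \<Longrightarrow> \<forall>g\<in>S. fsupp g \<Longrightarrow> fsupp p"
  by (induction rule: tideal.induct) (auto simp: fsupp_psubst fsupp_add fsupp_smult fsupp_pmul)

context alg begin

lemma eval_pol_lf: "eval_pol scale mul a p = lf scale p (eval_mon mul a)"
  by (simp add: eval_pol_def lf_def)

lemma lf_pmul:
  assumes "fsupp p" "fsupp q"
  shows "lf scale (pmul p q) (eval_mon mul a) = mul (lf scale p (eval_mon mul a)) (lf scale q (eval_mon mul a))"
proof -
  let ?P = "{s. p s \<noteq> 0}" and ?Q = "{t. q t \<noteq> 0}"
  have fP: "finite ?P" and fQ: "finite ?Q" using assms by (auto simp: fsupp_def)
  have inj: "inj_on (\<lambda>(s,t). M s t) (?P \<times> ?Q)" by (auto simp: inj_on_def)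
  have "lf scale (pmul p q) (eval_mon mul a) =
     (\<Sum>m\<in>(\<lambda>(s,t). M s t) ` (?P \<times> ?Q). scale (pmul p q m) (eval_mon mul a m))"
    by (rule lf_superset[OF _ pmul_sub]) (use fP fQ in auto)
  also have "\<dots> = (\<Sum>(s,t)\<in>?P \<times> ?Q. scale (p s * q t) (mul (eval_mon mul a s) (eval_mon mul a t)))"
    by (subst sum.reindex[OF inj]) (auto simp: pmul_def intro!: sum.cong)
  also have "\<dots> = mul (\<Sum>s\<in>?P. scale (p s) (eval_mon mul a s)) (\<Sum>t\<in>?Q. scale (q t) (eval_mon mul a t))"
    by (rule mul_sum_sum[symmetric])
  finally show ?thesis by (simp add: lf_def)
qed

lemma lf_evmon: "(\<forall>i. fsupp (\<sigma> i)) \<Longrightarrow>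
  lf scale (evmon \<sigma> t) (eval_mon mul a) = eval_mon mul (\<lambda>i. lf scale (\<sigma> i) (eval_mon mul a)) t"
  by (induction t) (auto simp: lf_pmul evmon_fsupp)

lemma lf_psubst:
  assumes "fsupp g" "\<forall>i. fsupp (\<sigma> i)"
  shows "lf scale (psubst \<sigma> g) (eval_mon mul a) = lf scale g (eval_mon mul (\<lambda>i. lf scale (\<sigma> i) (eval_mon mul a)))"
proof -
  have "lf scale (psubst \<sigma> g) (eval_mon mul a) =
      (\<Sum>t\<in>{t. g t \<noteq> 0}. lf scale (\<lambda>m. g t * evmon \<sigma> t m) (eval_mon mul a))"
    unfolding psubst_sum
    by (rule lf_sum) (use assms in \<open>auto simp: fsupp_def[of g] intro!: fsupp_smult evmon_fsupp\<close>)
  also have "\<dots> = (\<Sum>t\<in>{t. g t \<noteq> 0}. scale (g t) (eval_mon mul (\<lambda>i. lf scale (\<sigma> i) (eval_mon mul a)) t))"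
    using assms by (auto simp: lf_smult evmon_fsupp lf_evmon intro!: sum.cong)
  finally show ?thesis by (simp add: lf_def)
qed

lemma tideal_eval:
  assumes "in_var S scale mul" "\<forall>g\<in>S. fsupp g" "p \<in> tideal S"
  shows "lf scale p (eval_mon mul a) = 0"
  using assms(3)
proof (induction arbitrary: a rule: tideal.induct)
  case (gen g \<sigma>)
  then show ?case using assms(1,2) by (simp add: lf_psubst in_var_def eval_pol_lf)
next
  case zero then show ?case by (simp add: lf_def)
next
  case (add p q)
  have "fsupp p" "fsupp q" using add.hyps assms(2) tideal_fsupp by blast+
  then show ?case unfolding lf_add[OF \<open>fsupp p\<close> \<open>fsupp q\<close>] add.IH by simp
next
  case (smult p c) then show ?case using assms by (simp add: lf_smult tideal_fsupp)
next
  case (mulr p q) then show ?case using assms by (simp add: lf_pmul tideal_fsupp)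
next
  case (mull p q) then show ?case using assms by (simp add: lf_pmul tideal_fsupp)
qed

end


type_synonym key = "nat \<Rightarrow> nat option"

definition cmul :: "(key \<Rightarrow> 'k::comm_ring_1) \<Rightarrow> (key \<Rightarrow> 'k) \<Rightarrow> key \<Rightarrow> 'k" where
  "cmul p q K = (\<Sum>D\<in>Pow (dom K). p (K |` D) * q (K |` (dom K - D)))"

definition dI :: "key \<Rightarrow> nat set" where "dI K = {i. \<exists>j. K i = Some (Suc j)}"
definition dec :: "nat \<Rightarrow> key \<Rightarrow> key" where "dec i K = K(i \<mapsto> the (K i) - 1)"

definition cder :: "(key \<Rightarrow> 'k::comm_ring_1) \<Rightarrow> key \<Rightarrow> 'k" where
  "cder p K = (\<Sum>i\<in>dI K. p (dec i K))"

definition cscale :: "'k::comm_ring_1 \<Rightarrow> (key \<Rightarrow> 'k) \<Rightarrow> key \<Rightarrow> 'k" where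
  "cscale c p = (\<lambda>K. c * p K)"

definition nmul :: "(key \<Rightarrow> 'k::comm_ring_1) \<Rightarrow> (key \<Rightarrow> 'k) \<Rightarrow> key \<Rightarrow> 'k" where
  "nmul p q = cmul p (cder q)"

lemma dom_restr: "D \<subseteq> dom K \<Longrightarrow> dom (K |` D) = D"
  by auto

lemma cmul_add1: "cmul (p + q) r = cmul p r + cmul q r"
  by (rule ext) (simp add: cmul_def distrib_right sum.distrib)
lemma cmul_add2: "cmul r (p + q) = cmul r p + cmul r q"
  by (rule ext) (simp add: cmul_def distrib_left sum.distrib)
lemma cmul_sc1: "cmul (cscale c p) q = cscale c (cmul p q)"
  by (rule ext) (simp add: cmul_def cscale_def sum_distrib_left mult.assoc)
lemma cmul_sc2: "cmul p (cscale c q) = cscale c (cmul p q)"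
  by (rule ext) (simp add: cmul_def cscale_def sum_distrib_left mult.assoc mult.left_commute)
lemma cder_add: "cder (p + q) = cder p + cder q"
  by (rule ext) (simp add: cder_def sum.distrib)
lemma cder_sc: "cder (cscale c p) = cscale c (cder p)"
  by (rule ext) (simp add: cder_def cscale_def sum_distrib_left)

lemma cmul_comm: "cmul p q = cmul q p"
proof (rule ext)
  fix K :: key
  let ?X = "dom K"
  show "cmul p q K = cmul q p K"
    unfolding cmul_def
    by (rule sum.reindex_bij_witness[where i="\<lambda>D. ?X - D" and j="\<lambda>D. ?X - D"])
       (auto simp: mult.commute Diff_Diff_Int Int_absorb1)
qed

lemma restr_restr: "K |` D |` E = K |` (D \<inter> E)"
  by (rule restrict_restrict)

lemma cmul_restr: "D \<subseteq> dom K \<Longrightarrow> cmul p q (K |` D) = (\<Sum>E\<in>Pow D. p (K |` E) * q (K |` (D - E)))"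
  unfolding cmul_def dom_restr restr_restr
  by (rule sum.cong) (auto simp: Int_absorb1 Int_absorb2 intro!: arg_cong2[where f="\<lambda>x y. p (K |` x) * q (K |` y)"])

lemma diff3: "b \<subseteq> a \<Longrightarrow> X - b - (a - b) = X - a" by auto

lemma cmul_assoc: "cmul (cmul p q) r = cmul p (cmul q r)"
proof (rule ext)
  fix K :: key
  let ?X = "dom K"
  show "cmul (cmul p q) r K = cmul p (cmul q r) K"
  proof (cases "finite ?X")
    case False
    then have "infinite (Pow ?X)" by simp
    then show ?thesis by (simp add: cmul_def)
  next
    case fin: True
    have L: "cmul (cmul p q) r K = (\<Sum>D\<in>Pow ?X. \<Sum>E\<in>Pow D. p (K |` E) * q (K |` (D - E)) * r (K |` (?X - D)))"
      unfolding cmul_def[of "cmul p q"]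
      by (rule sum.cong[OF refl]) (simp add: cmul_restr sum_distrib_right)
    have R: "cmul p (cmul q r) K = (\<Sum>E\<in>Pow ?X. \<Sum>F\<in>Pow (?X - E). p (K |` E) * (q (K |` F) * r (K |` (?X - E - F))))"
      unfolding cmul_def[of p]
      by (rule sum.cong[OF refl]) (auto simp: cmul_restr sum_distrib_left Diff_Diff_Int)
    have fP: "\<And>A. finite A \<Longrightarrow> finite (Pow A)" by simp
    have "(\<Sum>D\<in>Pow ?X. \<Sum>E\<in>Pow D. p (K |` E) * q (K |` (D - E)) * r (K |` (?X - D)))
        = (\<Sum>(D,E)\<in>Sigma (Pow ?X) Pow. p (K |` E) * q (K |` (D - E)) * r (K |` (?X - D)))"
      by (rule sum.Sigma) (use fin in \<open>auto intro: finite_subset\<close>)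
    also have "\<dots> = (\<Sum>(E,F)\<in>Sigma (Pow ?X) (\<lambda>E. Pow (?X - E)). p (K |` E) * (q (K |` F) * r (K |` (?X - E - F))))"
      by (rule sum.reindex_bij_witness[where i="\<lambda>(E,F). (E \<union> F, E)" and j="\<lambda>(D,E). (E, D - E)"])
         (auto simp: mult.assoc diff3 intro!: arg_cong[where f="\<lambda>x. r (K |` x)"])
    also have "\<dots> = (\<Sum>E\<in>Pow ?X. \<Sum>F\<in>Pow (?X - E). p (K |` E) * (q (K |` F) * r (K |` (?X - E - F))))"
      by (rule sum.Sigma[symmetric]) (use fin in auto)
    finally show ?thesis using L R by simp
  qed
qed

lemma dI_sub: "dI K \<subseteq> dom K" by (auto simp: dI_def)
lemma dom_dec: "i \<in> dI K \<Longrightarrow> dom (dec i K) = dom K" by (auto simp: dI_def dec_def)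
lemma dI_restr: "dI (K |` D) = dI K \<inter> D" by (auto simp: dI_def restrict_map_def)
lemma dec_restr_in: "i \<in> D \<Longrightarrow> (dec i K) |` D = dec i (K |` D)"
  by (rule ext) (auto simp: dec_def restrict_map_def)
lemma dec_restr_out: "i \<notin> D \<Longrightarrow> (dec i K) |` D = K |` D"
  by (rule ext) (auto simp: dec_def restrict_map_def)

lemma cder_leibniz: "cder (cmul p q) = cmul (cder p) q + cmul p (cder q)"
proof (rule ext)
  fix K :: key
  let ?X = "dom K"
  show "cder (cmul p q) K = (cmul (cder p) q + cmul p (cder q)) K"
  proof (cases "finite ?X")
    case False
    then have "infinite (Pow ?X)" by simp
    moreover have "\<And>i. i \<in> dI K \<Longrightarrow> cmul p q (dec i K) = 0"
      using False by (simp add: cmul_def dom_dec)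
    ultimately show ?thesis by (simp add: cmul_def cder_def)
  next
    case fin: True
    have fI: "finite (dI K)" using fin dI_sub finite_subset by blast
    have "cder (cmul p q) K = (\<Sum>i\<in>dI K. \<Sum>D\<in>Pow ?X. p ((dec i K) |` D) * q ((dec i K) |` (?X - D)))"
      unfolding cder_def cmul_def by (rule sum.cong[OF refl]) (simp add: dom_dec)
    also have "\<dots> = (\<Sum>D\<in>Pow ?X. \<Sum>i\<in>dI K. p ((dec i K) |` D) * q ((dec i K) |` (?X - D)))"
      by (rule sum.swap)
    also have "\<dots> = (\<Sum>D\<in>Pow ?X. cder p (K |` D) * q (K |` (?X - D)) + p (K |` D) * cder q (K |` (?X - D)))"
    proof (rule sum.cong[OF refl])
      fix D assume D: "D \<in> Pow ?X"
      have "(\<Sum>i\<in>dI K. p ((dec i K) |` D) * q ((dec i K) |` (?X - D)))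
          = (\<Sum>i\<in>dI K \<inter> D. p ((dec i K) |` D) * q ((dec i K) |` (?X - D)))
          + (\<Sum>i\<in>dI K - D. p ((dec i K) |` D) * q ((dec i K) |` (?X - D)))"
        by (rule sum.Int_Diff[OF fI])
      also have "(\<Sum>i\<in>dI K \<inter> D. p ((dec i K) |` D) * q ((dec i K) |` (?X - D)))
          = cder p (K |` D) * q (K |` (?X - D))"
        unfolding cder_def dI_restr sum_distrib_right
        by (rule sum.cong[OF refl]) (auto simp: dec_restr_in dec_restr_out)
      also have "(\<Sum>i\<in>dI K - D. p ((dec i K) |` D) * q ((dec i K) |` (?X - D)))
          = p (K |` D) * cder q (K |` (?X - D))"
      proof -
        have e: "dI K \<inter> (?X - D) = dI K - D" using dI_sub by blast
        show ?thesis
          unfolding cder_def dI_restr sum_distrib_left e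
        proof (rule sum.cong[OF refl])
          fix x assume x: "x \<in> dI K - D"
          then have "x \<in> ?X - D" using dI_sub by blast
          then show "p ((dec x K) |` D) * q ((dec x K) |` (?X - D)) = p (K |` D) * q (dec x (K |` (?X - D)))"
            using x by (simp add: dec_restr_in dec_restr_out)
        qed
      qed
      finally show "(\<Sum>i\<in>dI K. p ((dec i K) |` D) * q ((dec i K) |` (?X - D)))
          = cder p (K |` D) * q (K |` (?X - D)) + p (K |` D) * cder q (K |` (?X - D))" .
    qed
    also have "\<dots> = (cmul (cder p) q + cmul p (cder q)) K"
      by (simp add: cmul_def sum.distrib)
    finally show ?thesis .
  qed
qed


lemma fsupp_mono: "fsupp (mono m :: 'm \<Rightarrow> 'k::zero_neq_one)"
  by (simp add: fsupp_def mono_def)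
lemma fsupp_diff: "fsupp p \<Longrightarrow> fsupp q \<Longrightarrow> fsupp (p - q :: 'm \<Rightarrow> 'k::comm_ring_1)"
  unfolding fsupp_def by (rule finite_subset[of _ "{m. p m \<noteq> 0} \<union> {m. q m \<noteq> 0}"]) auto

context alg begin
lemma lf_diff: "fsupp p \<Longrightarrow> fsupp q \<Longrightarrow> lf scale (p - q) E = lf scale p E - lf scale q E"
proof -
  assume a: "fsupp p" "fsupp q"
  have e: "p - q = p + (\<lambda>m. (-1) * q m)" by (rule ext) simp
  have f2: "fsupp (\<lambda>m. (-1) * q m)" using a(2) by (rule fsupp_smult)
  have "lf scale (p - q) E = lf scale p E + lf scale (\<lambda>m. (-1) * q m) E"
    unfolding e by (rule lf_add[OF a(1) f2])
  also have "lf scale (\<lambda>m. (-1) * q m) E = scale (-1) (lf scale q E)" by (rule lf_smult[OF a(2)])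
  finally show ?thesis unfolding sc_minus_one by (simp only: diff_conv_add_uminus)
qed
lemma lf_mono: "lf scale (mono m) E = E m"
  unfolding mono_def using lf_delta[of m 1 E] by simp
end

lemma is_alg_c: "is_algebra (cscale :: 'k::field \<Rightarrow> _) nmul"
  unfolding is_algebra_def nmul_def
  apply (simp add: cmul_add1 cmul_add2 cder_add cmul_sc1 cmul_sc2 cder_sc)
  by (auto simp: cscale_def algebra_simps)

interpretation C: alg "cscale :: 'k::field \<Rightarrow> _" nmul
  by unfold_locales (rule is_alg_c)

lemma cmul_lcomm: "cmul x (cmul y w) = cmul y (cmul x w)"
  by (metis cmul_assoc cmul_comm)

lemma nov_id1: "nmul (nmul x y) z - nmul x (nmul y z) - nmul (nmul y x) z + nmul y (nmul x z) = 0"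
proof -
  have a: "nmul (nmul x y) z = cmul x (cmul (cder y) (cder z))" by (simp add: nmul_def cmul_assoc)
  have b: "nmul x (nmul y z) = cmul x (cmul (cder y) (cder z)) + cmul x (cmul y (cder (cder z)))"
    by (simp add: nmul_def cder_leibniz cmul_add2)
  have c: "nmul (nmul y x) z = cmul y (cmul (cder x) (cder z))" by (simp add: nmul_def cmul_assoc)
  have d: "nmul y (nmul x z) = cmul y (cmul (cder x) (cder z)) + cmul y (cmul x (cder (cder z)))"
    by (simp add: nmul_def cder_leibniz cmul_add2)
  show ?thesis unfolding a b c d by (simp add: cmul_lcomm[of x y])
qed

lemma nov_id2: "nmul (nmul x y) z - nmul (nmul x z) y = 0"
  by (simp add: nmul_def cmul_assoc cmul_comm[of "cder y"])

lemma in_var_nov: "in_var nov_ids (cscale :: 'k::field \<Rightarrow> _) nmul"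
  unfolding in_var_def
proof (intro conjI ballI allI)
  show "is_algebra (cscale :: 'k::field \<Rightarrow> _) nmul" by (rule is_alg_c)
next
  fix g :: "mon \<Rightarrow> 'k" and a :: "nat \<Rightarrow> key \<Rightarrow> 'k"
  assume "g \<in> nov_ids"
  then show "eval_pol cscale nmul a g = 0"
    unfolding nov_ids_def
    by (auto simp: C.eval_pol_lf C.lf_diff C.lf_add fsupp_diff fsupp_add fsupp_mono C.lf_mono nov_id1 nov_id2)
qed


definition inc :: "nat \<Rightarrow> key \<Rightarrow> key" where "inc i K = K(i \<mapsto> Suc (the (K i)))"

definition domis :: "(key \<Rightarrow> 'k::zero) \<Rightarrow> nat set \<Rightarrow> bool" where
  "domis p A \<longleftrightarrow> (\<forall>K. p K \<noteq> 0 \<longrightarrow> dom K = A)"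

lemma cmul_split:
  assumes "domis p A" "domis q B" "A \<inter> B = {}" "finite A" "finite B"
  shows "cmul p q K = (if dom K = A \<union> B then p (K |` A) * q (K |` B) else 0)"
proof (cases "dom K = A \<union> B")
  case True
  have fin: "finite (Pow (dom K))" using True assms by simp
  have AX: "A \<in> Pow (dom K)" using True by auto
  have "cmul p q K = (\<Sum>D\<in>{A}. p (K |` D) * q (K |` (dom K - D)))"
    unfolding cmul_def
  proof (rule sum.mono_neutral_right[OF fin], use AX in blast, rule ballI)
    fix D assume D0: "D \<in> Pow (dom K) - {A}"
    then have D: "D \<in> Pow (dom K)" "D \<noteq> A" by auto
    have "p (K |` D) = 0"
    proof (rule ccontr)
      assume "p (K |` D) \<noteq> 0"
      then have "dom (K |` D) = A" using assms(1) unfolding domis_def by blast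
      moreover have "dom (K |` D) = D" using D(1) by auto
      ultimately show False using D(2) by simp
    qed
    then show "p (K |` D) * q (K |` (dom K - D)) = 0" by simp
  qed
  moreover have "dom K - A = B" using True assms(3) by auto
  ultimately show ?thesis using True by simp
next
  case False
  have "cmul p q K = 0"
    unfolding cmul_def
  proof (rule sum.neutral, rule ballI)
    fix D assume D: "D \<in> Pow (dom K)"
    show "p (K |` D) * q (K |` (dom K - D)) = 0"
    proof (rule ccontr)
      assume "p (K |` D) * q (K |` (dom K - D)) \<noteq> 0"
      then have "p (K |` D) \<noteq> 0" "q (K |` (dom K - D)) \<noteq> 0" by auto
      then have "dom (K |` D) = A" "dom (K |` (dom K - D)) = B" using assms(1,2) unfolding domis_def by blast+
      moreover have "dom (K |` D) = D" "dom (K |` (dom K - D)) = dom K - D" using D by auto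
      ultimately show False using D False by auto
    qed
  qed
  then show ?thesis using False by simp
qed

lemma domis_cmul:
  assumes "domis p A" "domis q B" "A \<inter> B = {}" "finite A" "finite B"
  shows "domis (cmul p q) (A \<union> B)"
  using cmul_split[OF assms] unfolding domis_def by (metis mult_zero_left)

lemma restr_add_eq: "dom K = A \<union> B \<Longrightarrow> (K |` A) ++ (K |` B) = K"
  by (rule ext) (auto simp: map_add_def restrict_map_def split: option.splits)

lemma cmul_sub:
  assumes "domis p A" "domis q B" "A \<inter> B = {}" "finite A" "finite B"
  shows "{K. cmul p q K \<noteq> 0} \<subseteq> (\<lambda>(K1,K2). K1 ++ K2) ` ({K. p K \<noteq> 0} \<times> {K. q K \<noteq> 0})"
proof -
  show "{K. cmul p q K \<noteq> 0} \<subseteq> (\<lambda>(K1,K2). K1 ++ K2) ` ({K. p K \<noteq> 0} \<times> {K. q K \<noteq> 0})"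
  proof
    fix K assume "K \<in> {K. cmul p q K \<noteq> 0}"
    then have "cmul p q K \<noteq> 0" by simp
    then have d: "dom K = A \<union> B" and "p (K |` A) \<noteq> 0" "q (K |` B) \<noteq> 0"
      using cmul_split[OF assms(1-5), of K] by (auto split: if_splits)
    then show "K \<in> (\<lambda>(K1,K2). K1 ++ K2) ` ({K. p K \<noteq> 0} \<times> {K. q K \<noteq> 0})"
      using restr_add_eq[OF d] by (auto intro!: image_eqI[where x="(K |` A, K |` B)"])
  qed
qed

lemma fsupp_cmul:
  assumes "domis p A" "domis q B" "A \<inter> B = {}" "finite A" "finite B" "fsupp p" "fsupp q"
  shows "fsupp (cmul p q)"
  unfolding fsupp_def
  by (rule finite_subset[OF cmul_sub[OF assms(1-5)]]) (use assms(6,7) in \<open>auto simp: fsupp_def\<close>)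

lemma dom_dec': "i \<in> dI K \<Longrightarrow> dom (dec i K) = dom K" by (rule dom_dec)

lemma domis_cder: "domis p A \<Longrightarrow> domis (cder p) A"
  unfolding domis_def
proof (intro allI impI)
  fix K assume a: "\<forall>K. p K \<noteq> 0 \<longrightarrow> dom K = A" and "cder p K \<noteq> 0"
  then obtain i where "i \<in> dI K" "p (dec i K) \<noteq> 0"
    unfolding cder_def using sum.not_neutral_contains_not_neutral by blast
  then show "dom K = A" using a dom_dec by fastforce
qed

lemma inc_dec: "i \<in> dI K \<Longrightarrow> inc i (dec i K) = K"
  by (rule ext) (auto simp: inc_def dec_def dI_def)

lemma fsupp_cder:
  assumes "domis p A" "finite A" "fsupp p"
  shows "fsupp (cder p)"
proof -
  have "{K. cder p K \<noteq> 0} \<subseteq> (\<lambda>(K,i). inc i K) ` ({K. p K \<noteq> 0} \<times> A)"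
  proof
    fix K assume "K \<in> {K. cder p K \<noteq> 0}"
    then obtain i where i: "i \<in> dI K" "p (dec i K) \<noteq> 0"
      unfolding cder_def using sum.not_neutral_contains_not_neutral by blast
    then have "dom (dec i K) = A" using assms(1) unfolding domis_def by blast
    moreover have "i \<in> dom K" using i(1) dI_sub by blast
    ultimately have iA: "i \<in> A" using dom_dec[OF i(1)] by simp
    have "K = (\<lambda>(K,i). inc i K) (dec i K, i)" using inc_dec[OF i(1)] by simp
    moreover have "(dec i K, i) \<in> {K. p K \<noteq> 0} \<times> A" using i(2) iA by simp
    ultimately show "K \<in> (\<lambda>(K,i). inc i K) ` ({K. p K \<noteq> 0} \<times> A)" by (rule image_eqI)
  qed
  note sub = this
  show ?thesis unfolding fsupp_def
    by (rule finite_subset[OF sub]) (use assms(2,3) in \<open>auto simp: fsupp_def\<close>)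
qed


definition Ed :: "('a \<Rightarrow> 'a \<Rightarrow> 'a) \<Rightarrow> ('a \<Rightarrow> 'a) \<Rightarrow> (nat \<Rightarrow> 'a) \<Rightarrow> mon \<Rightarrow> key \<Rightarrow> 'a" where
  "Ed mul d a u K = eval_mon mul (\<lambda>i. (d ^^ the (K i)) (a i)) u"

lemma E_cong: "(\<And>i. i \<in> set (leaves u) \<Longrightarrow> K i = K' i) \<Longrightarrow> Ed mul d a u K = Ed mul d a u K'"
  unfolding Ed_def by (induction u) auto

lemma radd1: "dom K1 = A \<Longrightarrow> dom K2 = B \<Longrightarrow> A \<inter> B = {} \<Longrightarrow> (K1 ++ K2) |` A = K1"
  by (rule ext) (auto simp: restrict_map_def map_add_def split: option.splits)
lemma radd2: "dom K1 = A \<Longrightarrow> dom K2 = B \<Longrightarrow> A \<inter> B = {} \<Longrightarrow> (K1 ++ K2) |` B = K2"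
  by (rule ext) (auto simp: restrict_map_def map_add_def split: option.splits)

locale der = alg +
  fixes d :: "'a::ab_group_add \<Rightarrow> 'a"
  assumes isder: "is_derivation scale mul d"
begin

lemma d_add: "d (x + y) = d x + d y" using isder unfolding is_derivation_def by blast
lemma d_sc: "d (scale c x) = scale c (d x)" using isder unfolding is_derivation_def by blast
lemma d_mul: "d (mul x y) = mul (d x) y + mul x (d y)" using isder unfolding is_derivation_def by blast
lemma d_zero[simp]: "d 0 = 0" using d_add[of 0 0] by simp
lemma d_sum: "d (\<Sum>i\<in>I. f i) = (\<Sum>i\<in>I. d (f i))"
  by (induction I rule: infinite_finite_induct) (auto simp: d_add)

lemma Ev_mul:
  assumes dp: "domis p (set (leaves s))" and dq: "domis q (set (leaves t))"
    and disj: "set (leaves s) \<inter> set (leaves t) = {}" and fp: "fsupp p" and fq: "fsupp q"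
  shows "lf scale (cmul p q) (Ed mul d a (M s t)) = mul (lf scale p (Ed mul d a s)) (lf scale q (Ed mul d a t))"
proof -
  let ?A = "set (leaves s)" and ?B = "set (leaves t)"
  let ?P = "{K. p K \<noteq> 0}" and ?Q = "{K. q K \<noteq> 0}"
  have fP: "finite ?P" and fQ: "finite ?Q" using fp fq by (auto simp: fsupp_def)
  have domP: "\<And>K. K \<in> ?P \<Longrightarrow> dom K = ?A" using dp by (auto simp: domis_def)
  have domQ: "\<And>K. K \<in> ?Q \<Longrightarrow> dom K = ?B" using dq by (auto simp: domis_def)
  have inj: "inj_on (\<lambda>(K1,K2). K1 ++ K2) (?P \<times> ?Q)"
  proof (rule inj_onI)
    fix x y assume hx: "x \<in> ?P \<times> ?Q" and hy: "y \<in> ?P \<times> ?Q"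
      and e: "(\<lambda>(K1,K2). K1 ++ K2) x = (\<lambda>(K1,K2). K1 ++ K2) y"
    obtain K1 K2 where x: "x = (K1,K2)" by (cases x)
    obtain K1' K2' where y: "y = (K1',K2')" by (cases y)
    have h: "K1 \<in> ?P" "K2 \<in> ?Q" "K1' \<in> ?P" "K2' \<in> ?Q" "K1 ++ K2 = K1' ++ K2'"
      using hx hy e unfolding x y by auto
    have "K1 = (K1 ++ K2) |` ?A" using radd1[OF domP[OF h(1)] domQ[OF h(2)] disj] by simp
    moreover have "K1' = (K1' ++ K2') |` ?A" using radd1[OF domP[OF h(3)] domQ[OF h(4)] disj] by simp
    moreover have "K2 = (K1 ++ K2) |` ?B" using radd2[OF domP[OF h(1)] domQ[OF h(2)] disj] by simp
    moreover have "K2' = (K1' ++ K2') |` ?B" using radd2[OF domP[OF h(3)] domQ[OF h(4)] disj] by simp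
    ultimately show "x = y" using h(5) x y by simp
  qed
  have "lf scale (cmul p q) (Ed mul d a (M s t)) =
     (\<Sum>K\<in>(\<lambda>(K1,K2). K1 ++ K2) ` (?P \<times> ?Q). scale (cmul p q K) (Ed mul d a (M s t) K))"
    by (rule lf_superset[OF _ cmul_sub[OF dp dq disj]]) (use fP fQ in auto)
  also have "\<dots> = (\<Sum>(K1,K2)\<in>?P \<times> ?Q. scale (p K1 * q K2) (mul (Ed mul d a s K1) (Ed mul d a t K2)))"
    unfolding sum.reindex[OF inj]
  proof (rule sum.cong[OF refl], clarsimp)
    fix K1 K2 assume h: "p K1 \<noteq> 0" "q K2 \<noteq> 0"
    have d1: "dom K1 = ?A" and d2: "dom K2 = ?B" using h domP domQ by auto
    have "cmul p q (K1 ++ K2) = p K1 * q K2"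
      using cmul_split[OF dp dq disj finite_set finite_set, of "K1 ++ K2"] d1 d2 radd1[OF d1 d2 disj] radd2[OF d1 d2 disj]
      by (auto simp: Un_commute)
    moreover have "Ed mul d a s (K1 ++ K2) = Ed mul d a s K1"
      by (rule E_cong) (use d2 disj in \<open>auto simp: map_add_def split: option.splits\<close>)
    moreover have "Ed mul d a t (K1 ++ K2) = Ed mul d a t K2"
      by (rule E_cong) (use d2 in \<open>auto simp: map_add_def split: option.splits\<close>)
    ultimately show "scale (cmul p q (K1 ++ K2)) (Ed mul d a (M s t) (K1 ++ K2)) =
        scale (p K1 * q K2) (mul (Ed mul d a s K1) (Ed mul d a t K2))"
      by (simp add: Ed_def)
  qed
  also have "\<dots> = mul (\<Sum>K\<in>?P. scale (p K) (Ed mul d a s K)) (\<Sum>K\<in>?Q. scale (q K) (Ed mul d a t K))"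
    by (rule mul_sum_sum[symmetric])
  finally show ?thesis by (simp add: lf_def)
qed

end


lemma Ed_M: "Ed mul d a (M s t) K = mul (Ed mul d a s K) (Ed mul d a t K)" by (simp add: Ed_def)

lemma inc_iff:
  assumes "i \<in> dom K"
  shows "K' = inc i K \<longleftrightarrow> (i \<in> dI K' \<and> K = dec i K')"
proof
  assume h: "K' = inc i K"
  then have "i \<in> dI K'" by (simp add: dI_def inc_def)
  moreover have "K = dec i K'" using h assms by (auto simp: dec_def inc_def intro!: ext)
  ultimately show "i \<in> dI K' \<and> K = dec i K'" by simp
next
  assume "i \<in> dI K' \<and> K = dec i K'"
  then show "K' = inc i K" using inc_dec by metis
qed

lemma cder_as_sum:
  assumes dp: "domis p A" and fp: "fsupp p" and fA: "finite A"
  shows "cder p = (\<Sum>x\<in>{K. p K \<noteq> 0} \<times> A. (\<lambda>K'. if K' = inc (snd x) (fst x) then p (fst x) else 0))"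
proof (rule ext)
  fix K'
  let ?F = "{K. p K \<noteq> 0}"
  have fF: "finite ?F" using fp by (simp add: fsupp_def)
  have domF: "\<And>K. K \<in> ?F \<Longrightarrow> dom K = A" using dp by (auto simp: domis_def)
  have inner: "(\<Sum>K\<in>?F. if K' = inc i K then p K else 0) = (if i \<in> dI K' then p (dec i K') else 0)"
    if iA: "i \<in> A" for i
  proof -
    have "(\<Sum>K\<in>?F. if K' = inc i K then p K else 0) = (\<Sum>K\<in>?F. if K = dec i K' then (if i \<in> dI K' then p K else 0) else 0)"
    proof (rule sum.cong[OF refl])
      fix K assume "K \<in> ?F"
      then have "i \<in> dom K" using domF iA by auto
      then show "(if K' = inc i K then p K else 0) = (if K = dec i K' then (if i \<in> dI K' then p K else 0) else 0)"
        using inc_iff[of i K K'] by auto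
    qed
    also have "\<dots> = (if dec i K' \<in> ?F then (if i \<in> dI K' then p (dec i K') else 0) else 0)"
      by (rule sum.delta[OF fF])
    also have "\<dots> = (if i \<in> dI K' then p (dec i K') else 0)" by auto
    finally show ?thesis .
  qed
  have "(\<Sum>x\<in>?F \<times> A. (\<lambda>K'. if K' = inc (snd x) (fst x) then p (fst x) else 0)) K'
      = (\<Sum>x\<in>?F \<times> A. if K' = inc (snd x) (fst x) then p (fst x) else 0)"
    by (simp add: sum_fun_apply)
  also have "\<dots> = (\<Sum>K\<in>?F. \<Sum>i\<in>A. if K' = inc i K then p K else 0)"
    by (simp add: sum.cartesian_product split_def)
  also have "\<dots> = (\<Sum>i\<in>A. \<Sum>K\<in>?F. if K' = inc i K then p K else 0)"
    by (rule sum.swap)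
  also have "\<dots> = (\<Sum>i\<in>A. if i \<in> dI K' then p (dec i K') else 0)"
    by (rule sum.cong[OF refl]) (rule inner)
  also have "\<dots> = (\<Sum>i\<in>A \<inter> dI K'. p (dec i K'))"
    by (simp add: sum.inter_restrict[OF fA])
  also have "\<dots> = cder p K'"
  proof (cases "dom K' = A")
    case True
    then have "A \<inter> dI K' = dI K'" using dI_sub by blast
    then show ?thesis by (simp add: cder_def)
  next
    case False
    have z: "p (dec i K') = 0" if "i \<in> dI K'" for i
    proof (rule ccontr)
      assume "p (dec i K') \<noteq> 0"
      then have "dom (dec i K') = A" using dp by (auto simp: domis_def)
      then show False using False dom_dec[OF that] by simp
    qed
    have "(\<Sum>i\<in>A \<inter> dI K'. p (dec i K')) = 0" by (rule sum.neutral) (auto simp: z)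
    moreover have "cder p K' = 0" unfolding cder_def by (rule sum.neutral) (auto simp: z)
    ultimately show ?thesis by simp
  qed
  finally show "cder p K' = (\<Sum>x\<in>?F \<times> A. (\<lambda>K'. if K' = inc (snd x) (fst x) then p (fst x) else 0)) K'"
    by simp
qed

context der begin

lemma E_der: "distinct (leaves u) \<Longrightarrow> d (Ed mul d a u K) = (\<Sum>i\<in>set (leaves u). Ed mul d a u (inc i K))"
proof (induction u arbitrary: K)
  case (V i)
  then show ?case by (simp add: Ed_def inc_def)
next
  case (M s t)
  have ds: "distinct (leaves s)" and dt: "distinct (leaves t)"
    and disj: "set (leaves s) \<inter> set (leaves t) = {}" using M.prems by auto
  have e1: "Ed mul d a t (inc i K) = Ed mul d a t K" if "i \<in> set (leaves s)" for i
    by (rule E_cong) (use that disj in \<open>auto simp: inc_def\<close>)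
  have e2: "Ed mul d a s (inc i K) = Ed mul d a s K" if "i \<in> set (leaves t)" for i
    by (rule E_cong) (use that disj in \<open>auto simp: inc_def\<close>)
  have "d (Ed mul d a (M s t) K) = mul (d (Ed mul d a s K)) (Ed mul d a t K) + mul (Ed mul d a s K) (d (Ed mul d a t K))"
    by (simp add: Ed_M d_mul)
  also have "\<dots> = (\<Sum>i\<in>set (leaves s). Ed mul d a (M s t) (inc i K)) + (\<Sum>i\<in>set (leaves t). Ed mul d a (M s t) (inc i K))"
    unfolding M.IH(1)[OF ds] M.IH(2)[OF dt] mul_sum1 mul_sum2 Ed_M
    by (simp add: e1 e2)
  also have "\<dots> = (\<Sum>i\<in>set (leaves (M s t)). Ed mul d a (M s t) (inc i K))"
    by (simp add: sum.union_disjoint[OF finite_set finite_set disj])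
  finally show ?case .
qed

lemma Ev_der:
  assumes dp: "domis p (set (leaves u))" and dist: "distinct (leaves u)" and fp: "fsupp p"
  shows "lf scale (cder p) (Ed mul d a u) = d (lf scale p (Ed mul d a u))"
proof -
  let ?A = "set (leaves u)" and ?F = "{K. p K \<noteq> 0}"
  have fF: "finite ?F" using fp by (simp add: fsupp_def)
  have fs: "fsupp (\<lambda>K'. if K' = inc (snd x) (fst x) then p (fst x) else 0)" for x :: "key \<times> nat"
    by (simp add: fsupp_def)
  have "lf scale (cder p) (Ed mul d a u)
      = (\<Sum>x\<in>?F \<times> ?A. lf scale (\<lambda>K'. if K' = inc (snd x) (fst x) then p (fst x) else 0) (Ed mul d a u))"
    unfolding cder_as_sum[OF dp fp finite_set]
    by (rule lf_sum) (use fF fs in auto)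
  also have "\<dots> = (\<Sum>x\<in>?F \<times> ?A. scale (p (fst x)) (Ed mul d a u (inc (snd x) (fst x))))"
    by (simp add: lf_delta)
  also have "\<dots> = (\<Sum>K\<in>?F. scale (p K) (\<Sum>i\<in>?A. Ed mul d a u (inc i K)))"
    by (simp add: sum.cartesian_product split_def sc_sum)
  also have "\<dots> = (\<Sum>K\<in>?F. d (scale (p K) (Ed mul d a u K)))"
    by (simp add: E_der[OF dist] d_sc)
  also have "\<dots> = d (lf scale p (Ed mul d a u))"
    by (simp add: lf_def d_sum)
  finally show ?thesis .
qed

end


definition bvec :: "nat \<Rightarrow> key \<Rightarrow> 'k::comm_ring_1" where
  "bvec i = (\<lambda>K. if K = [i \<mapsto> 0] then 1 else 0)"

definition ne :: "mon \<Rightarrow> key \<Rightarrow> 'k::comm_ring_1" where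
  "ne w = eval_mon nmul bvec w"

lemma ne_props: "distinct (leaves w) \<Longrightarrow> fsupp (ne w :: key \<Rightarrow> 'k::comm_ring_1) \<and> domis (ne w :: key \<Rightarrow> 'k) (set (leaves w))"
proof (induction w)
  case (V i)
  then show ?case by (auto simp: ne_def bvec_def fsupp_def domis_def)
next
  case (M s t)
  have ds: "distinct (leaves s)" and dt: "distinct (leaves t)"
    and disj: "set (leaves s) \<inter> set (leaves t) = {}" using M.prems by auto
  have e: "(ne (M s t) :: key \<Rightarrow> 'k) = cmul (ne s) (cder (ne t))" by (simp add: ne_def nmul_def)
  have ps: "fsupp (ne s :: key \<Rightarrow> 'k)" "domis (ne s :: key \<Rightarrow> 'k) (set (leaves s))" using M.IH(1)[OF ds] by auto
  have pt: "fsupp (ne t :: key \<Rightarrow> 'k)" "domis (ne t :: key \<Rightarrow> 'k) (set (leaves t))" using M.IH(2)[OF dt] by auto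
  have ct: "fsupp (cder (ne t) :: key \<Rightarrow> 'k)" "domis (cder (ne t) :: key \<Rightarrow> 'k) (set (leaves t))"
    using fsupp_cder[OF pt(2) finite_set pt(1)] domis_cder[OF pt(2)] by auto
  show ?case unfolding e
    using fsupp_cmul[OF ps(2) ct(2) disj finite_set finite_set ps(1) ct(1)]
      domis_cmul[OF ps(2) ct(2) disj finite_set finite_set] by simp
qed

lemma phi_fst: "leaves (fst (phi m)) = dleaves m"
  by (induction m) auto

lemma phi_snd: "set (leaves (snd (phi m))) = set (dleaves m) \<and> (distinct (dleaves m) \<longrightarrow> distinct (leaves (snd (phi m))))"
  by (induction m) auto

context der begin

lemma main_ind:
  "distinct (dleaves m) \<Longrightarrow> eval_dmon mul d a m = lf scale (ne (snd (phi m))) (Ed mul d a (fst (phi m)))"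
proof (induction m)
  case (DV i)
  have "lf scale (bvec i) (Ed mul d a (V i)) = scale 1 (Ed mul d a (V i) [i \<mapsto> 0])"
    unfolding bvec_def by (rule lf_delta)
  moreover have "Ed mul d a (V i) [i \<mapsto> 0] = a i" by (simp add: Ed_def)
  ultimately show ?case by (simp add: ne_def)
next
  case (Prec s t)
  have ds: "distinct (dleaves s)" and dt: "distinct (dleaves t)"
    and disj: "set (dleaves s) \<inter> set (dleaves t) = {}" using Prec.prems by auto
  let ?P = "ne (snd (phi s)) :: key \<Rightarrow> 'b" and ?Q = "ne (snd (phi t)) :: key \<Rightarrow> 'b"
  have ps: "fsupp ?P" "domis ?P (set (leaves (fst (phi s))))"
    using ne_props[of "snd (phi s)"] phi_snd[of s] ds by (auto simp: phi_fst)
  have pt: "fsupp ?Q" "domis ?Q (set (leaves (fst (phi t))))"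
    using ne_props[of "snd (phi t)"] phi_snd[of t] dt by (auto simp: phi_fst)
  have ct: "fsupp (cder ?Q)" "domis (cder ?Q) (set (leaves (fst (phi t))))"
    using fsupp_cder[OF pt(2) finite_set pt(1)] domis_cder[OF pt(2)] by auto
  have disj': "set (leaves (fst (phi s))) \<inter> set (leaves (fst (phi t))) = {}" using disj by (simp add: phi_fst)
  have dist_t: "distinct (leaves (fst (phi t)))" using dt by (simp add: phi_fst)
  have "lf scale (ne (snd (phi (Prec s t)))) (Ed mul d a (fst (phi (Prec s t))))
      = lf scale (cmul ?P (cder ?Q)) (Ed mul d a (M (fst (phi s)) (fst (phi t))))"
    by (simp add: ne_def nmul_def)
  also have "\<dots> = mul (lf scale ?P (Ed mul d a (fst (phi s)))) (lf scale (cder ?Q) (Ed mul d a (fst (phi t))))"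
    by (rule Ev_mul[OF ps(2) ct(2) disj' ps(1) ct(1)])
  also have "\<dots> = mul (eval_dmon mul d a s) (d (eval_dmon mul d a t))"
    using Prec.IH ds dt Ev_der[OF pt(2) dist_t pt(1)] by simp
  finally show ?case by simp
next
  case (Succ s t)
  have ds: "distinct (dleaves s)" and dt: "distinct (dleaves t)"
    and disj: "set (dleaves s) \<inter> set (dleaves t) = {}" using Succ.prems by auto
  let ?P = "ne (snd (phi s)) :: key \<Rightarrow> 'b" and ?Q = "ne (snd (phi t)) :: key \<Rightarrow> 'b"
  have ps: "fsupp ?P" "domis ?P (set (leaves (fst (phi s))))"
    using ne_props[of "snd (phi s)"] phi_snd[of s] ds by (auto simp: phi_fst)
  have pt: "fsupp ?Q" "domis ?Q (set (leaves (fst (phi t))))"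
    using ne_props[of "snd (phi t)"] phi_snd[of t] dt by (auto simp: phi_fst)
  have cs: "fsupp (cder ?P)" "domis (cder ?P) (set (leaves (fst (phi s))))"
    using fsupp_cder[OF ps(2) finite_set ps(1)] domis_cder[OF ps(2)] by auto
  have disj': "set (leaves (fst (phi s))) \<inter> set (leaves (fst (phi t))) = {}" using disj by (simp add: phi_fst)
  have dist_s: "distinct (leaves (fst (phi s)))" using ds by (simp add: phi_fst)
  have "lf scale (ne (snd (phi (Succ s t)))) (Ed mul d a (fst (phi (Succ s t))))
      = lf scale (cmul (cder ?P) ?Q) (Ed mul d a (M (fst (phi s)) (fst (phi t))))"
    by (simp add: ne_def nmul_def cmul_comm)
  also have "\<dots> = mul (lf scale (cder ?P) (Ed mul d a (fst (phi s)))) (lf scale ?Q (Ed mul d a (fst (phi t))))"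
    by (rule Ev_mul[OF cs(2) pt(2) disj' cs(1) pt(1)])
  also have "\<dots> = mul (d (eval_dmon mul d a s)) (eval_dmon mul d a t)"
    using Succ.IH ds dt Ev_der[OF ps(2) dist_s ps(1)] by simp
  finally show ?case by simp
qed

end


lemma nov_fsupp: "\<forall>g\<in>(nov_ids :: (mon \<Rightarrow> 'k::field) set). fsupp g"
  unfolding nov_ids_def by (auto intro!: fsupp_diff fsupp_add fsupp_mono)

lemma fsupp_tens1: "fsupp g \<Longrightarrow> fsupp (tens g (mono w) :: mon \<times> mon \<Rightarrow> 'k::comm_ring_1)"
  unfolding fsupp_def
  by (rule finite_subset[of _ "{u. g u \<noteq> 0} \<times> {w}"]) (auto simp: tens_def mono_def split: if_splits)

lemma fsupp_tens2: "fsupp h \<Longrightarrow> fsupp (tens (mono u) h :: mon \<times> mon \<Rightarrow> 'k::comm_ring_1)"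
  unfolding fsupp_def
  by (rule finite_subset[of _ "{u} \<times> {w. h w \<noteq> 0}"]) (auto simp: tens_def mono_def split: if_splits)

lemma sum_sing1: "(\<Sum>x\<in>{u} \<times> B. f x) = (\<Sum>y\<in>B. f (u, y))"
proof -
  have "{u} \<times> B = Pair u ` B" by auto
  then show ?thesis by (simp add: sum.reindex inj_on_def)
qed

lemma sum_sing2: "(\<Sum>x\<in>A \<times> {w}. f x) = (\<Sum>y\<in>A. f (y, w))"
proof -
  have "A \<times> {w} = (\<lambda>y. (y, w)) ` A" by auto
  then show ?thesis by (simp add: sum.reindex inj_on_def)
qed

context der begin

lemma G1_zero:
  assumes iv: "in_var S scale mul" and Sf: "\<forall>g\<in>S. fsupp g" and gt: "g \<in> tideal S" and fg: "fsupp g"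
    and dw: "distinct (leaves w)"
  shows "lf scale (tens g (mono w)) (\<lambda>x. lf scale (ne (snd x)) (Ed mul d a (fst x))) = 0"
proof -
  let ?G = "{u. g u \<noteq> 0}" and ?N = "{K. (ne w :: key \<Rightarrow> 'b) K \<noteq> 0}"
  have fG: "finite ?G" using fg by (simp add: fsupp_def)
  have "fsupp (ne w :: key \<Rightarrow> 'b)" by (rule conjunct1[OF ne_props[OF dw]])
  then have fN: "finite ?N" by (simp add: fsupp_def)
  have "lf scale (tens g (mono w)) (\<lambda>x. lf scale (ne (snd x)) (Ed mul d a (fst x)))
      = (\<Sum>x\<in>?G \<times> {w}. scale (tens g (mono w) x) (lf scale (ne (snd x)) (Ed mul d a (fst x))))"
    by (rule lf_superset) (use fG in \<open>auto simp: tens_def mono_def split: if_splits\<close>)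
  also have "\<dots> = (\<Sum>u\<in>?G. scale (g u) (\<Sum>K\<in>?N. scale (ne w K) (Ed mul d a u K)))"
    by (simp add: sum_sing2 tens_def mono_def lf_def)
  also have "\<dots> = (\<Sum>K\<in>?N. scale (ne w K) (\<Sum>u\<in>?G. scale (g u) (Ed mul d a u K)))"
    unfolding sc_sum sc_assoc by (subst sum.swap) (simp add: mult.commute)
  also have "\<dots> = 0"
  proof (rule sum.neutral, rule ballI)
    fix K
    have "(\<Sum>u\<in>?G. scale (g u) (Ed mul d a u K)) = lf scale g (eval_mon mul (\<lambda>i. (d ^^ the (K i)) (a i)))"
      by (simp add: lf_def Ed_def)
    also have "\<dots> = 0" by (rule tideal_eval[OF iv Sf gt])
    finally show "scale (ne w K) (\<Sum>u\<in>?G. scale (g u) (Ed mul d a u K)) = 0" by simp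
  qed
  finally show ?thesis .
qed

lemma G2_zero:
  assumes ht: "h \<in> tideal nov_ids" and fh: "fsupp h" and dh: "\<forall>w. h w \<noteq> 0 \<longrightarrow> distinct (leaves w)"
  shows "lf scale (tens (mono u) h) (\<lambda>x. lf scale (ne (snd x)) (Ed mul d a (fst x))) = 0"
proof -
  let ?H = "{w. h w \<noteq> 0}"
  let ?N = "\<Union>w\<in>?H. {K. (ne w :: key \<Rightarrow> 'b) K \<noteq> 0}"
  have fH: "finite ?H" using fh by (simp add: fsupp_def)
  have "fsupp (ne w :: key \<Rightarrow> 'b)" if "w \<in> ?H" for w
    by (rule conjunct1[OF ne_props]) (use that dh in auto)
  then have fN: "finite ?N" using fH by (auto simp: fsupp_def)
  have ev0: "eval_pol cscale nmul bvec h = 0"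
    using C.tideal_eval[OF in_var_nov nov_fsupp ht] by (simp add: C.eval_pol_lf)
  have coef: "(\<Sum>w\<in>?H. h w * ne w K) = 0" for K
  proof -
    have "(\<Sum>w\<in>?H. h w * ne w K) = eval_pol cscale nmul bvec h K"
      by (simp add: eval_pol_def sum_fun_apply cscale_def ne_def)
    then show ?thesis using ev0 by simp
  qed
  have "lf scale (tens (mono u) h) (\<lambda>x. lf scale (ne (snd x)) (Ed mul d a (fst x)))
      = (\<Sum>x\<in>{u} \<times> ?H. scale (tens (mono u) h x) (lf scale (ne (snd x)) (Ed mul d a (fst x))))"
    by (rule lf_superset) (use fH in \<open>auto simp: tens_def mono_def split: if_splits\<close>)
  also have "\<dots> = (\<Sum>w\<in>?H. scale (h w) (lf scale (ne w) (Ed mul d a u)))"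
    by (simp add: sum_sing1 tens_def mono_def)
  also have "\<dots> = (\<Sum>w\<in>?H. scale (h w) (\<Sum>K\<in>?N. scale (ne w K) (Ed mul d a u K)))"
  proof (rule sum.cong[OF refl])
    fix w assume "w \<in> ?H"
    then show "scale (h w) (lf scale (ne w) (Ed mul d a u)) = scale (h w) (\<Sum>K\<in>?N. scale (ne w K) (Ed mul d a u K))"
      by (subst lf_superset[OF fN]) auto
  qed
  also have "\<dots> = (\<Sum>K\<in>?N. scale (\<Sum>w\<in>?H. h w * ne w K) (Ed mul d a u K))"
    unfolding sc_sum sc_assoc sc_sum2 by (rule sum.swap)
  also have "\<dots> = 0" by (simp add: coef)
  finally show ?thesis .
qed

end


theorem mainTheorem12:
  fixes S :: "(mon \<Rightarrow> 'k::field) set"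
    and n :: nat
    and f :: "dmon \<Rightarrow> 'k"
    and scale :: "'k \<Rightarrow> 'a::ab_group_add \<Rightarrow> 'a"
    and mul :: "'a \<Rightarrow> 'a \<Rightarrow> 'a"
    and d :: "'a \<Rightarrow> 'a"
  assumes "\<forall>g\<in>S. multilinear_identity g"
    and "ml_dpol n f"
    and "white_identity S n f"
    and "in_var S scale mul"
    and "is_derivation scale mul d"
  shows "\<forall>a. eval_dpol scale mul d a f = 0"
proof
  fix a
  have alg: "is_algebra scale mul" using assms(4) by (simp add: in_var_def)
  interpret A: der scale mul d
    by unfold_locales (use alg assms(5) in auto)
  have Sf: "\<forall>g\<in>S. fsupp g" using assms(1) by (simp add: multilinear_identity_def)
  define Psi where "Psi = (\<lambda>x :: mon \<times> mon. lf scale (ne (snd x) :: key \<Rightarrow> 'k) (Ed mul d a (fst x)))"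
  let ?Sf = "{m. f m \<noteq> 0}"
  have fSf: "finite ?Sf" using assms(2) by (simp add: ml_dpol_def fsupp_def)
  have distf: "\<And>m. m \<in> ?Sf \<Longrightarrow> distinct (dleaves m)" using assms(2) by (simp add: ml_dpol_def)
  have step1: "eval_dpol scale mul d a f = lf scale (tens_image f) Psi"
  proof -
    have "eval_dpol scale mul d a f = (\<Sum>m\<in>?Sf. scale (f m) (Psi (phi m)))"
      unfolding eval_dpol_def Psi_def
      by (rule sum.cong[OF refl]) (simp add: A.main_ind distf)
    also have "\<dots> = (\<Sum>x\<in>phi ` ?Sf. \<Sum>m\<in>{m \<in> ?Sf. phi m = x}. scale (f m) (Psi (phi m)))"
      by (rule sum.group[symmetric]) (use fSf in auto)
    also have "\<dots> = (\<Sum>x\<in>phi ` ?Sf. scale (tens_image f x) (Psi x))"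
      unfolding tens_image_def A.sc_sum2
      by (rule sum.cong[OF refl], rule sum.cong) auto
    also have "\<dots> = lf scale (tens_image f) Psi"
    proof (rule A.lf_superset[symmetric])
      show "finite (phi ` ?Sf)" using fSf by simp
      show "{m. tens_image f m \<noteq> 0} \<subseteq> phi ` ?Sf"
      proof
        fix x assume "x \<in> {m. tens_image f m \<noteq> 0}"
        then have "tens_image f x \<noteq> 0" by simp
        then have "{m. f m \<noteq> 0 \<and> phi m = x} \<noteq> {}" unfolding tens_image_def by (metis sum.empty)
        then show "x \<in> phi ` ?Sf" by auto
      qed
    qed
    finally show ?thesis .
  qed
  have gen: "fsupp T \<and> lf scale T Psi = 0"
    if "T \<in> {tens g (mono w) | g w. g \<in> var_kernel S n \<and> ml_mon n w}
            \<union> {tens (mono u) h | u h. ml_mon n u \<and> h \<in> var_kernel nov_ids n}" for T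
    using that
  proof
    assume "T \<in> {tens g (mono w) | g w. g \<in> var_kernel S n \<and> ml_mon n w}"
    then obtain g w where T: "T = tens g (mono w)" and g: "g \<in> tideal S" "ml_pol n g" and w: "ml_mon n w"
      by (auto simp: var_kernel_def)
    have fg: "fsupp g" using g(2) by (simp add: ml_pol_def)
    have dw: "distinct (leaves w)" using w by (simp add: ml_mon_def)
    show ?thesis unfolding T Psi_def
      using fsupp_tens1[OF fg] A.G1_zero[OF assms(4) Sf g(1) fg dw] by simp
  next
    assume "T \<in> {tens (mono u) h | u h. ml_mon n u \<and> h \<in> var_kernel nov_ids n}"
    then obtain u h where T: "T = tens (mono u) h" and h: "h \<in> tideal nov_ids" "ml_pol n h"
      by (auto simp: var_kernel_def)
    have fh: "fsupp h" using h(2) by (simp add: ml_pol_def)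
    have dh: "\<forall>w. h w \<noteq> 0 \<longrightarrow> distinct (leaves w)" using h(2) by (simp add: ml_pol_def ml_mon_def)
    show ?thesis unfolding T Psi_def
      using fsupp_tens2[OF fh] A.G2_zero[OF h(1) fh dh] by simp
  qed
  obtain t r where TI: "tens_image f = (\<Sum>x\<in>t. (\<lambda>y. r x * x y))" and ft: "finite t"
    and tsub: "t \<subseteq> {tens g (mono w) | g w. g \<in> var_kernel S n \<and> ml_mon n w}
            \<union> {tens (mono u) h | u h. ml_mon n u \<and> h \<in> var_kernel nov_ids n}"
    using assms(3) unfolding white_identity_def hadamard_kernel_def lin_span_def by blast
  have gx: "fsupp x \<and> lf scale x Psi = 0" if xt: "x \<in> t" for x
    by (rule gen) (rule subsetD[OF tsub xt])
  have "lf scale (tens_image f) Psi = (\<Sum>x\<in>t. lf scale (\<lambda>y. r x * x y) Psi)"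
    unfolding TI by (rule A.lf_sum[OF ft]) (use gx in \<open>simp add: fsupp_smult\<close>)
  also have "\<dots> = (\<Sum>x\<in>t. scale (r x) (lf scale x Psi))"
    by (rule sum.cong[OF refl]) (use gx in \<open>simp add: A.lf_smult\<close>)
  also have "\<dots> = 0"
    by (rule sum.neutral) (use gx in simp)
  finally show "eval_dpol scale mul d a f = 0" using step1 by simp
qed


end
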